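(* Let $I\subset S=K[x_1,\dots,x_t]$ be an $\mathfrak m$-primary monomial ideal with $v(I)=\alpha(I)-1$. Then $v(I^{n+1})=v(I)+n\,\alpha(I)$ for all $n\ge 1$.
   Context: $K$ is a field, $S$ is standard graded and $\mathfrak m=\langle x_1,\dots,x_t\rangle$. For a proper graded ideal $J$, the $v$-number is $v(J)=\min\{k\ge 0 : \exists f\in S_k,\ \mathcal P\in\operatorname{Ass}(S/J) \text{ with } (J:f)=\mathcal P\}$. $\alpha(I)=\min\{\deg f : f\in I\setminus\{0\} \text{ homogeneous}\}$. *)

theory Defs
  imports "HOL-Library.Poly_Mapping"
begin

text \<open>Polynomial ring S = K[x_v : v in 'v] over a field K, with finitely many
variables indexed by the finite type 'v (so t = CARD('v)).\<close>

type_synonym ('v, 'k) mpoly = "('v \<Rightarrow>\<^sub>0 nat) \<Rightarrow>\<^sub>0 'k"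

definition is_ideal :: "'a::comm_ring_1 set \<Rightarrow> bool" where
  "is_ideal J \<longleftrightarrow> 0 \<in> J \<and> (\<forall>a\<in>J. \<forall>b\<in>J. a + b \<in> J) \<and> (\<forall>r. \<forall>a\<in>J. r * a \<in> J)"

definition ideal_gen :: "'a::comm_ring_1 set \<Rightarrow> 'a set" where
  "ideal_gen G = \<Inter>{J. is_ideal J \<and> G \<subseteq> J}"

definition prime_ideal :: "'a::comm_ring_1 set \<Rightarrow> bool" where
  "prime_ideal P \<longleftrightarrow> is_ideal P \<and> P \<noteq> UNIV \<and> (\<forall>a b. a * b \<in> P \<longrightarrow> a \<in> P \<or> b \<in> P)"

definition radical :: "'a::comm_ring_1 set \<Rightarrow> 'a set" where
  "radical J = {f. \<exists>n. f ^ n \<in> J}"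

definition colon :: "'a::comm_ring_1 set \<Rightarrow> 'a \<Rightarrow> 'a set" where
  "colon J f = {g. g * f \<in> J}"

text \<open>Ass(S/J): primes of the form Ann(f + J) = (J : f)\<close>
definition Ass :: "'a::comm_ring_1 set \<Rightarrow> 'a set set" where
  "Ass J = {P. prime_ideal P \<and> (\<exists>f. P = colon J f)}"

fun ideal_pow :: "'a::comm_ring_1 set \<Rightarrow> nat \<Rightarrow> 'a set" where
  "ideal_pow I 0 = UNIV"
| "ideal_pow I (Suc n) = ideal_gen {a * b | a b. a \<in> I \<and> b \<in> ideal_pow I n}"

definition mdeg :: "('v \<Rightarrow>\<^sub>0 nat) \<Rightarrow> nat" where
  "mdeg m = (\<Sum>v\<in>Poly_Mapping.keys m. Poly_Mapping.lookup m v)"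

definition homogeneous :: "nat \<Rightarrow> ('v, 'k::zero) mpoly \<Rightarrow> bool" where
  "homogeneous k f \<longleftrightarrow> (\<forall>m\<in>Poly_Mapping.keys f. mdeg m = k)"

definition var :: "'v \<Rightarrow> ('v, 'k::{zero,one}) mpoly" where
  "var v = Poly_Mapping.single (Poly_Mapping.single v 1) 1"

definition monomial_poly :: "('v, 'k::{zero,one}) mpoly \<Rightarrow> bool" where
  "monomial_poly f \<longleftrightarrow> (\<exists>m. f = Poly_Mapping.single m 1)"

definition monomial_ideal :: "('v, 'k::comm_ring_1) mpoly set \<Rightarrow> bool" where
  "monomial_ideal I \<longleftrightarrow> (\<exists>G. (\<forall>g\<in>G. monomial_poly g) \<and> I = ideal_gen G)"

definition max_ideal :: "('v, 'k::comm_ring_1) mpoly set" where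
  "max_ideal = ideal_gen (range var)"

definition m_primary :: "('v, 'k::comm_ring_1) mpoly set \<Rightarrow> bool" where
  "m_primary I \<longleftrightarrow> is_ideal I \<and> I \<noteq> UNIV \<and> radical I = max_ideal"

definition v_number :: "('v, 'k::comm_ring_1) mpoly set \<Rightarrow> nat" where
  "v_number J = (LEAST k. \<exists>f P. homogeneous k f \<and> P \<in> Ass J \<and> colon J f = P)"

definition alpha :: "('v, 'k::comm_ring_1) mpoly set \<Rightarrow> nat" where
  "alpha I = (LEAST d. \<exists>f\<in>I. f \<noteq> 0 \<and> homogeneous d f)"

end

theory Submission
  imports Defs
begin


lemma ideal_gen_ideal: "is_ideal (ideal_gen G)"
  unfolding is_ideal_def ideal_gen_def by auto

lemma ideal_gen_sub: "G \<subseteq> ideal_gen G"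
  unfolding ideal_gen_def by auto

lemma ideal_gen_least: "is_ideal J \<Longrightarrow> G \<subseteq> J \<Longrightarrow> ideal_gen G \<subseteq> J"
  unfolding ideal_gen_def by auto

lemma ideal_mult: "is_ideal J \<Longrightarrow> a \<in> J \<Longrightarrow> r * a \<in> J"
  unfolding is_ideal_def by auto
lemma ideal_mult2: "is_ideal J \<Longrightarrow> a \<in> J \<Longrightarrow> a * r \<in> J"
  unfolding is_ideal_def by (metis mult.commute)
lemma ideal_add: "is_ideal J \<Longrightarrow> a \<in> J \<Longrightarrow> b \<in> J \<Longrightarrow> a + b \<in> J"
  unfolding is_ideal_def by auto
lemma ideal_0: "is_ideal J \<Longrightarrow> 0 \<in> J"
  unfolding is_ideal_def by auto
lemma ideal_neg: "is_ideal J \<Longrightarrow> a \<in> J \<Longrightarrow> - a \<in> J"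
  using ideal_mult[of J a "-1"] by simp
lemma ideal_diff: "is_ideal J \<Longrightarrow> a \<in> J \<Longrightarrow> b \<in> J \<Longrightarrow> a - b \<in> J"
  using ideal_add[of J a "-b"] ideal_neg by auto
lemma ideal_sum: "is_ideal J \<Longrightarrow> (\<And>x. x \<in> A \<Longrightarrow> f x \<in> J) \<Longrightarrow> sum f A \<in> J"
  by (induction A rule: infinite_finite_induct) (auto simp: ideal_0 ideal_add)
lemma ideal_UNIV: "is_ideal J \<Longrightarrow> 1 \<in> J \<Longrightarrow> J = UNIV"
  using ideal_mult[of J 1] by force

lemma ideal_pow_ideal: "is_ideal (ideal_pow I (Suc n))"
  by (simp add: ideal_gen_ideal)

lemma ideal_pow_power: "a \<in> I \<Longrightarrow> a ^ j \<in> ideal_pow I j"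
proof (induction j)
  case (Suc j)
  then show ?case using ideal_gen_sub by fastforce
qed simp

lemma ideal_pow_mult: "a \<in> I \<Longrightarrow> b \<in> ideal_pow I n \<Longrightarrow> a * b \<in> ideal_pow I (Suc n)"
  using ideal_gen_sub by fastforce

lemma colon_ideal: "is_ideal J \<Longrightarrow> is_ideal (colon J f)"
  unfolding is_ideal_def colon_def by (auto simp: distrib_right mult.assoc)

lemma ideal_sub_colon: "is_ideal J \<Longrightarrow> J \<subseteq> colon J f"
  unfolding colon_def using ideal_mult2 by blast

lemma prime_power: "prime_ideal P \<Longrightarrow> a ^ j \<in> P \<Longrightarrow> a \<in> P"
proof (induction j)
  case 0
  then show ?case unfolding prime_ideal_def using ideal_UNIV by auto
next
  case (Suc j)
  then show ?case unfolding prime_ideal_def by auto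
qed



lemma lookup_single_mult:
  fixes f :: "('a::cancel_comm_monoid_add \<Rightarrow>\<^sub>0 'b::comm_ring_1)"
  shows "Poly_Mapping.lookup (Poly_Mapping.single m c * f) (m + k) = c * Poly_Mapping.lookup f k"
proof -
  have "Poly_Mapping.lookup (Poly_Mapping.single m c * f) (m + k)
     = (\<Sum>l. (c * (\<Sum>q. Poly_Mapping.lookup f q when m + k = l + q)) when m = l)"
    unfolding lookup_mult lookup_single by (simp add: when_mult)
  also have "\<dots> = c * (\<Sum>q. Poly_Mapping.lookup f q when m + k = m + q)"
    by simp
  also have "\<dots> = c * (\<Sum>q. Poly_Mapping.lookup f q when k = q)"
    by simp
  also have "\<dots> = c * Poly_Mapping.lookup f k" by simp
  finally show ?thesis .
qed

lemma keys_single_mult: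
  fixes f :: "('a::cancel_comm_monoid_add \<Rightarrow>\<^sub>0 'b::comm_ring_1)"
  shows "Poly_Mapping.keys (Poly_Mapping.single m 1 * f) = (\<lambda>k. m + k) ` Poly_Mapping.keys f"
proof
  show "Poly_Mapping.keys (Poly_Mapping.single m 1 * f) \<subseteq> (\<lambda>k. m + k) ` Poly_Mapping.keys f"
    using keys_mult[of "Poly_Mapping.single m 1" f] by (auto split: if_splits)
  show "(\<lambda>k. m + k) ` Poly_Mapping.keys f \<subseteq> Poly_Mapping.keys (Poly_Mapping.single m 1 * f)"
    using lookup_single_mult[of m 1 f] by (auto simp: in_keys_iff)
qed

lemma single_power: "(Poly_Mapping.single (Poly_Mapping.single v k) (1::'b::comm_ring_1)) ^ j = Poly_Mapping.single (Poly_Mapping.single v (j * k)) 1"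
  by (induction j) (auto simp: mult_single single_add)

lemma mdeg_UNIV: "mdeg (m :: 'v::finite \<Rightarrow>\<^sub>0 nat) = (\<Sum>v\<in>UNIV. Poly_Mapping.lookup m v)"
  unfolding mdeg_def by (rule sum.mono_neutral_left) (auto simp: in_keys_iff)

lemma mdeg_add: "mdeg ((a::'v::finite \<Rightarrow>\<^sub>0 nat) + b) = mdeg a + mdeg b"
  by (simp add: mdeg_UNIV lookup_add sum.distrib)

lemma mdeg_single: "mdeg (Poly_Mapping.single (v::'v::finite) k) = k"
  by (simp add: mdeg_UNIV lookup_single when_def)

lemma single_power_ex: "\<exists>mp. (Poly_Mapping.single (m::'v::finite \<Rightarrow>\<^sub>0 nat) (1::'b::comm_ring_1)) ^ j = Poly_Mapping.single mp 1 \<and> mdeg mp = j * mdeg m"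
proof (induction j)
  case 0
  then show ?case by (intro exI[of _ 0]) (auto simp: mdeg_UNIV)
next
  case (Suc j)
  then obtain mp where "Poly_Mapping.single m (1::'b) ^ j = Poly_Mapping.single mp 1 \<and> mdeg mp = j * mdeg m" by blast
  then show ?case by (intro exI[of _ "m + mp"]) (auto simp: mult_single mdeg_add)
qed

lemma mdeg_zero_iff: "mdeg (m::'v::finite \<Rightarrow>\<^sub>0 nat) = 0 \<longleftrightarrow> m = 0"
  by (auto simp: mdeg_UNIV intro!: poly_mapping_eqI)

definition Dg :: "nat \<Rightarrow> ('v, 'k::comm_ring_1) mpoly set" where
  "Dg c = {h. \<forall>m\<in>Poly_Mapping.keys h. c \<le> mdeg m}"

lemma Dg_mult: "a \<in> Dg c \<Longrightarrow> b \<in> Dg d \<Longrightarrow> (a::('v::finite,'k::comm_ring_1) mpoly) * b \<in> Dg (c + d)"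
  unfolding Dg_def using keys_mult[of a b] by (fastforce simp: mdeg_add intro: add_mono)

lemma Dg_ideal: "is_ideal (Dg c :: ('v::finite,'k::comm_ring_1) mpoly set)"
  unfolding is_ideal_def
proof (intro conjI ballI allI)
  show "0 \<in> (Dg c :: ('v::finite,'k::comm_ring_1) mpoly set)" by (simp add: Dg_def)
  show "a + b \<in> Dg c" if "a \<in> Dg c" "b \<in> Dg c" for a b :: "('v,'k) mpoly"
    using that keys_add[of a b] unfolding Dg_def by blast
  show "r * a \<in> Dg c" if "a \<in> Dg c" for r a :: "('v,'k) mpoly"
    using Dg_mult[OF _ that, of r 0] by (simp add: Dg_def)
qed



definition Zc :: "('v, 'k::comm_ring_1) mpoly set" where
  "Zc = {h. Poly_Mapping.lookup h 0 = 0}"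

lemma plus_eq_zero_pm: "(0::'v \<Rightarrow>\<^sub>0 nat) = l + q \<longleftrightarrow> l = 0 \<and> q = 0"
proof
  assume "0 = l + q"
  then have "\<forall>v. Poly_Mapping.lookup l v + Poly_Mapping.lookup q v = 0"
    by (metis lookup_add lookup_zero)
  then show "l = 0 \<and> q = 0" by (auto intro!: poly_mapping_eqI)
qed simp

lemma lookup_mult_0:
  "Poly_Mapping.lookup ((a::('v, 'k::comm_ring_1) mpoly) * b) 0 = Poly_Mapping.lookup a 0 * Poly_Mapping.lookup b 0"
proof -
  have *: "(\<Sum>q. Poly_Mapping.lookup b q when (0::'v \<Rightarrow>\<^sub>0 nat) = l + q) = (Poly_Mapping.lookup b 0 when l = 0)" for l
  proof (cases "l = 0")
    case True
    then show ?thesis by (simp add: plus_eq_zero_pm)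
  next
    case False
    then show ?thesis by (simp add: plus_eq_zero_pm)
  qed
  show ?thesis unfolding lookup_mult * by (simp add: mult_when)
qed

lemma Zc_ideal: "is_ideal (Zc :: ('v, 'k::comm_ring_1) mpoly set)"
  unfolding is_ideal_def Zc_def by (auto simp: lookup_add lookup_mult_0)

lemma Zc_prime: "prime_ideal (Zc :: ('v, 'k::field) mpoly set)"
  unfolding prime_ideal_def
proof (intro conjI allI impI)
  show "is_ideal (Zc :: ('v, 'k::field) mpoly set)" by (rule Zc_ideal)
  have "(1::('v, 'k) mpoly) \<notin> Zc" by (simp add: Zc_def)
  then show "(Zc :: ('v, 'k::field) mpoly set) \<noteq> UNIV" by blast
  fix a b :: "('v, 'k) mpoly"
  assume "a * b \<in> Zc" then show "a \<in> Zc \<or> b \<in> Zc" by (simp add: Zc_def lookup_mult_0)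
qed

lemma poly_expansion: "(h::('a \<Rightarrow>\<^sub>0 'b::comm_monoid_add)) = (\<Sum>m\<in>Poly_Mapping.keys h. Poly_Mapping.single m (Poly_Mapping.lookup h m))"
proof -
  have *: "finite A \<Longrightarrow> Poly_Mapping.lookup (\<Sum>m\<in>A. Poly_Mapping.single m (Poly_Mapping.lookup h m)) j =
            (if j \<in> A then Poly_Mapping.lookup h j else 0)" for A j
    by (induction A rule: finite_induct) (auto simp: lookup_single lookup_add when_def)
  show ?thesis
    by (rule poly_mapping_eqI) (fastforce simp add: in_keys_iff *)
qed

lemma Zc_sub:
  fixes Q :: "('v, 'k::comm_ring_1) mpoly set"
  assumes Q: "is_ideal Q" and vars: "\<And>w. var w \<in> Q"
  shows "Zc \<subseteq> Q"
proof
  fix h :: "('v, 'k) mpoly" assume "h \<in> Zc"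
  then have h0: "Poly_Mapping.lookup h 0 = 0" by (simp add: Zc_def)
  have "Poly_Mapping.single m (Poly_Mapping.lookup h m) \<in> Q" if "m \<in> Poly_Mapping.keys h" for m
  proof -
    have "m \<noteq> 0" using that h0 by (auto simp: in_keys_iff)
    then obtain w where w: "Poly_Mapping.lookup m w \<noteq> 0"
      by (metis lookup_zero poly_mapping_eqI)
    have "m = (m - Poly_Mapping.single w 1) + Poly_Mapping.single w 1"
      using w by (intro poly_mapping_eqI) (auto simp: lookup_add lookup_minus lookup_single when_def)
    then have "Poly_Mapping.single m (Poly_Mapping.lookup h m)
       = Poly_Mapping.single (m - Poly_Mapping.single w 1) (Poly_Mapping.lookup h m) * var w"
      unfolding var_def by (metis mult.right_neutral mult_single)
    then show ?thesis using ideal_mult[OF Q vars] by metis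
  qed
  then have "(\<Sum>m\<in>Poly_Mapping.keys h. Poly_Mapping.single m (Poly_Mapping.lookup h m)) \<in> Q"
    by (intro ideal_sum[OF Q]) auto
  then show "h \<in> Q" using poly_expansion[of h] by simp
qed

lemma Zc_sup:
  fixes Q :: "('v, 'k::field) mpoly set"
  assumes Q: "is_ideal Q" and vars: "\<And>w. var w \<in> Q" and ne: "Q \<noteq> UNIV"
  shows "Q \<subseteq> Zc"
proof
  fix h assume hQ: "h \<in> Q"
  show "h \<in> Zc"
  proof (rule ccontr)
    assume "h \<notin> Zc"
    then have c: "Poly_Mapping.lookup h 0 \<noteq> 0" by (simp add: Zc_def)
    let ?c = "Poly_Mapping.lookup h 0"
    have "h - Poly_Mapping.single 0 ?c \<in> Zc" by (simp add: Zc_def lookup_minus)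
    then have "h - Poly_Mapping.single 0 ?c \<in> Q" using Zc_sub[OF Q vars] by blast
    then have "Poly_Mapping.single 0 ?c \<in> Q" using ideal_diff[OF Q hQ] by fastforce
    then have "Poly_Mapping.single 0 (inverse ?c) * Poly_Mapping.single 0 ?c \<in> Q"
      by (rule ideal_mult[OF Q])
    then have "1 \<in> Q" using c by (simp add: mult_single)
    then show False using ideal_UNIV[OF Q] ne by blast
  qed
qed

lemma Zc_eq:
  fixes Q :: "('v, 'k::field) mpoly set"
  assumes Q: "is_ideal Q" and vars: "\<And>w. var w \<in> Q" and ne: "Q \<noteq> UNIV"
  shows "Q = Zc"
  using Zc_sub[OF Q vars] Zc_sup[OF assms] by blast



lemma var_power: "(var w :: ('v, 'k::comm_ring_1) mpoly) ^ k = Poly_Mapping.single (Poly_Mapping.single w k) 1"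
  unfolding var_def by (simp only: single_power mult.right_neutral)

lemma mprim_ideal: "m_primary I \<Longrightarrow> is_ideal I"
  by (simp add: m_primary_def)

lemma mprim_var: "m_primary (I :: ('v, 'k::comm_ring_1) mpoly set) \<Longrightarrow> \<exists>k. var w ^ k \<in> I"
proof -
  assume "m_primary I"
  then have r: "radical I = max_ideal" by (simp add: m_primary_def)
  have "var w \<in> ideal_gen (range var :: ('v, 'k) mpoly set)"
    by (rule subsetD[OF ideal_gen_sub]) (rule rangeI)
  then have "var w \<in> radical I" unfolding r max_ideal_def .
  then show ?thesis unfolding radical_def by (rule CollectD)
qed

lemma var_in_prime:
  assumes "m_primary (I :: ('v, 'k::comm_ring_1) mpoly set)" "prime_ideal P" "ideal_pow I j \<subseteq> P"
  shows "var w \<in> P"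
proof -
  obtain k where "var w ^ k \<in> I" using mprim_var[OF assms(1)] by blast
  then have "(var w ^ k) ^ j \<in> ideal_pow I j" by (rule ideal_pow_power)
  then have "var w ^ (k * j) \<in> P" using assms(3) by (auto simp: power_mult)
  then show ?thesis using prime_power[OF assms(2)] by blast
qed

lemma mono_mult_in: "is_ideal I \<Longrightarrow> Poly_Mapping.single m 1 \<in> I \<Longrightarrow> Poly_Mapping.single (m' + m) (1::'k::comm_ring_1) \<in> I"
  using ideal_mult[of I "Poly_Mapping.single m 1" "Poly_Mapping.single m' 1"] by (simp add: mult_single)

lemma socle_exists:
  fixes I :: "('v::finite, 'k::field) mpoly set"
  assumes mp: "m_primary I"
  shows "\<exists>m. Poly_Mapping.single m 1 \<notin> I \<and> (\<forall>w. var w * Poly_Mapping.single m 1 \<in> I)"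
proof -
  have I: "is_ideal I" using mp by (rule mprim_ideal)
  have ne: "I \<noteq> UNIV" using mp by (simp add: m_primary_def)
  obtain k where k: "\<And>w. Poly_Mapping.single (Poly_Mapping.single w (k w)) 1 \<in> I"
    using mprim_var[OF mp] var_power by metis
  define M where "M = {m. Poly_Mapping.single m (1::'k) \<notin> I}"
  have bound: "\<forall>w. Poly_Mapping.lookup m w < k w" if "m \<in> M" for m
  proof (rule ccontr)
    assume "\<not> (\<forall>w. Poly_Mapping.lookup m w < k w)"
    then obtain w where w: "k w \<le> Poly_Mapping.lookup m w" by (auto simp: not_less)
    have "m = (m - Poly_Mapping.single w (k w)) + Poly_Mapping.single w (k w)"
      using w by (intro poly_mapping_eqI) (auto simp: lookup_add lookup_minus lookup_single when_def)
    then have "Poly_Mapping.single m (1::'k) \<in> I" using mono_mult_in[OF I k[of w]] by metis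
    then show False using that by (simp add: M_def)
  qed
  define B where "B = (\<Sum>w\<in>UNIV. k w)"
  have degb: "mdeg m \<le> B" if "m \<in> M" for m
    using bound[OF that] unfolding mdeg_UNIV B_def by (intro sum_mono) (simp add: less_imp_le)
  have "0 \<in> M" using ne ideal_UNIV[OF I] by (auto simp: M_def)
  define d where "d = Max (mdeg ` M)"
  have "mdeg ` M \<subseteq> {..B}" using degb by (auto simp: image_subset_iff)
  then have fin: "finite (mdeg ` M)" using finite_subset[OF _ finite_atMost] by blast
  have "mdeg ` M \<noteq> {}" using \<open>0 \<in> M\<close> by blast
  then have "d \<in> mdeg ` M" unfolding d_def using fin by (rule Max_in[rotated])
  then obtain m where m: "m \<in> M" "mdeg m = d" by blast
  have "var w * Poly_Mapping.single m 1 \<in> I" for w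
  proof -
    have deg: "mdeg (Poly_Mapping.single w 1 + m) = d + 1" using m mdeg_add[of "Poly_Mapping.single w 1" m] mdeg_single[of w 1] by simp
    have "Poly_Mapping.single w 1 + m \<notin> M"
    proof
      assume "Poly_Mapping.single w 1 + m \<in> M"
      then have "d + 1 \<in> mdeg ` M" using deg by (metis image_eqI)
      then have "d + 1 \<le> d" unfolding d_def using Max_ge[OF fin] by blast
      then show False by simp
    qed
    then have "Poly_Mapping.single (Poly_Mapping.single w 1 + m) (1::'k) \<in> I" unfolding M_def by blast
    moreover have "var w * Poly_Mapping.single m 1 = Poly_Mapping.single (Poly_Mapping.single w 1 + m) (1::'k)"
      unfolding var_def by (simp add: mult_single)
    ultimately show ?thesis by simp
  qed
  then show ?thesis using m(1) unfolding M_def by blast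
qed



lemma socle_Ass:
  fixes I :: "('v::finite, 'k::field) mpoly set"
  assumes mp: "m_primary I"
  shows "\<exists>k f P. homogeneous k f \<and> P \<in> Ass I \<and> colon I f = P"
proof -
  obtain m where m: "Poly_Mapping.single m 1 \<notin> I" "\<And>w. var w * Poly_Mapping.single m (1::'k) \<in> I"
    using socle_exists[OF mp] by blast
  have I: "is_ideal I" using mp by (rule mprim_ideal)
  have "colon I (Poly_Mapping.single m 1) = Zc"
  proof (rule Zc_eq)
    show "is_ideal (colon I (Poly_Mapping.single m 1))" by (rule colon_ideal[OF I])
    show "var w \<in> colon I (Poly_Mapping.single m 1)" for w using m(2) by (simp add: colon_def)
    show "colon I (Poly_Mapping.single m 1) \<noteq> UNIV"
    proof
      assume "colon I (Poly_Mapping.single m 1) = UNIV"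
      then have "1 \<in> colon I (Poly_Mapping.single m 1)" by simp
      then show False using m(1) unfolding colon_def by simp
    qed
  qed
  moreover have "homogeneous (mdeg m) (Poly_Mapping.single m (1::'k))" by (simp add: homogeneous_def)
  ultimately show ?thesis using Zc_prime unfolding Ass_def by (metis (mono_tags, lifting) mem_Collect_eq)
qed



lemma pow_Dg: "I \<subseteq> Dg a \<Longrightarrow> ideal_pow (I :: ('v::finite, 'k::comm_ring_1) mpoly set) j \<subseteq> Dg (j * a)"
proof (induction j)
  case 0
  then show ?case by (simp add: Dg_def)
next
  case (Suc j)
  show ?case unfolding ideal_pow.simps
  proof (rule ideal_gen_least[OF Dg_ideal], rule subsetI)
    fix z assume "z \<in> {x * y |x y. x \<in> I \<and> y \<in> ideal_pow I j}"
    then obtain x y where xy: "z = x * y" "x \<in> I" "y \<in> ideal_pow I j" by blast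
    have "x \<in> Dg a" using xy(2) Suc.prems by blast
    moreover have "y \<in> Dg (j * a)" using xy(3) Suc.IH Suc.prems by blast
    ultimately have "x * y \<in> Dg (a + j * a)" by (rule Dg_mult)
    then show "z \<in> Dg (Suc j * a)" using xy(1) by simp
  qed
qed

lemma min_generator:
  fixes I :: "('v::finite, 'k::field) mpoly set"
  assumes mon: "monomial_ideal I" and mp: "m_primary I"
  shows "I \<subseteq> Dg (alpha I)" "\<exists>m0. Poly_Mapping.single m0 1 \<in> I \<and> mdeg m0 = alpha I" "alpha I \<ge> 1"
proof -
  have I: "is_ideal I" using mp by (rule mprim_ideal)
  from mon[unfolded monomial_ideal_def] obtain G where G: "\<forall>g\<in>G. monomial_poly g" "I = ideal_gen G" by blast
  obtain k where k: "var (undefined::'v) ^ k \<in> I" using mprim_var[OF mp] by blast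
  let ?u = "Poly_Mapping.single (Poly_Mapping.single (undefined::'v) k) (1::'k)"
  have u1: "?u \<in> I" using k unfolding var_power .
  have u2: "?u \<noteq> 0" by (metis lookup_single_eq one_neq_zero lookup_zero)
  have u3: "homogeneous k ?u" by (simp add: homogeneous_def mdeg_single)
  note u = u1 u2 u3
  have aex: "\<exists>f\<in>I. f \<noteq> 0 \<and> homogeneous (alpha I) f"
    unfolding alpha_def by (rule LeastI_ex) (use u in blast)
  have Gm: "\<exists>m. g = Poly_Mapping.single m 1" if "g \<in> G" for g
    using G(1) that unfolding monomial_poly_def by blast
  have GI: "G \<subseteq> I" unfolding G(2) by (rule ideal_gen_sub)
  have "G \<subseteq> Dg (alpha I)"
  proof
    fix g assume g: "g \<in> G"
    then obtain m where m: "g = Poly_Mapping.single m 1" using Gm by blast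
    have "alpha I \<le> mdeg m" unfolding alpha_def
    proof (rule Least_le)
      have "g \<in> I" using g GI by blast
      moreover have "g \<noteq> 0" unfolding m by (metis lookup_single_eq one_neq_zero lookup_zero)
      moreover have "homogeneous (mdeg m) g" unfolding m by (simp add: homogeneous_def)
      ultimately show "\<exists>f\<in>I. f \<noteq> 0 \<and> homogeneous (mdeg m) f" by blast
    qed
    then show "g \<in> Dg (alpha I)" using m by (simp add: Dg_def)
  qed
  then show IA: "I \<subseteq> Dg (alpha I)" using G(2) ideal_gen_least[OF Dg_ideal] by blast
  have "G \<noteq> {}"
  proof
    assume "G = {}"
    have z: "is_ideal {0::('v,'k) mpoly}" by (simp add: is_ideal_def)
    have "I \<subseteq> {0}" unfolding G(2) \<open>G = {}\<close> by (rule ideal_gen_least[OF z]) simp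
    then show False using u1 u2 by blast
  qed
  then obtain g0 where "g0 \<in> G" by blast
  then obtain m where "Poly_Mapping.single m 1 \<in> G" using Gm by blast
  define c where "c = (LEAST d. \<exists>m. Poly_Mapping.single m 1 \<in> G \<and> mdeg m = d)"
  have "\<exists>m0. Poly_Mapping.single m0 1 \<in> G \<and> mdeg m0 = c"
    unfolding c_def by (rule LeastI_ex) (use \<open>Poly_Mapping.single m 1 \<in> G\<close> in blast)
  then obtain m0 where m0: "Poly_Mapping.single m0 1 \<in> G" "mdeg m0 = c" by blast
  have "G \<subseteq> Dg c"
  proof
    fix g assume g: "g \<in> G"
    then obtain m where m: "g = Poly_Mapping.single m 1" using Gm by blast
    have "c \<le> mdeg m" unfolding c_def by (rule Least_le) (use g m in blast)
    then show "g \<in> Dg c" using m by (simp add: Dg_def)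
  qed
  then have IC: "I \<subseteq> Dg c" using G(2) ideal_gen_least[OF Dg_ideal] by blast
  obtain f where f: "f \<in> I" "f \<noteq> 0" "homogeneous (alpha I) f" using aex by blast
  have "Poly_Mapping.keys f \<noteq> {}" using f(2) by simp
  then obtain mf where mf: "mf \<in> Poly_Mapping.keys f" by blast
  have "f \<in> Dg c" using IC f(1) by blast
  then have "c \<le> mdeg mf" using mf by (simp add: Dg_def)
  moreover have "mdeg mf = alpha I" using f(3) mf by (simp add: homogeneous_def)
  ultimately have "c \<le> alpha I" by simp
  moreover have "alpha I \<le> c"
  proof -
    have "Poly_Mapping.single m0 1 \<in> I" using GI m0(1) by (rule subsetD)
    then have "Poly_Mapping.single m0 (1::'k) \<in> Dg (alpha I)" using IA by (rule rev_subsetD)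
    then show ?thesis using m0(2) by (simp add: Dg_def)
  qed
  ultimately have "mdeg m0 = alpha I" using m0(2) by simp
  moreover have "Poly_Mapping.single m0 1 \<in> I" using GI m0(1) by (rule subsetD)
  ultimately show "\<exists>m0. Poly_Mapping.single m0 1 \<in> I \<and> mdeg m0 = alpha I" by blast
  then obtain m1 where m1: "Poly_Mapping.single m1 1 \<in> I" "mdeg m1 = alpha I" by blast
  show "alpha I \<ge> 1"
  proof (rule ccontr)
    assume "\<not> alpha I \<ge> 1"
    then have "mdeg m1 = 0" using m1(2) by simp
    then have "m1 = 0" using mdeg_zero_iff by blast
    then have "1 \<in> I" using m1(1) by simp
    then have "I = UNIV" using ideal_UNIV[OF I] by blast
    moreover have "I \<noteq> UNIV" using mp unfolding m_primary_def by blast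
    ultimately show False by blast
  qed
qed



lemma nonzero_key: "f \<noteq> 0 \<Longrightarrow> \<exists>m. m \<in> Poly_Mapping.keys f"
  by (metis all_not_in_conv keys_eq_empty)

theorem proposition4p10:
  fixes I :: "('v::finite, 'k::field) mpoly set"
  assumes "monomial_ideal I"
    and "m_primary I"
    and "v_number I = alpha I - 1"
    and "n \<ge> 1"
  shows "v_number (ideal_pow I (n + 1)) = v_number I + n * alpha I"
proof -
  have mon: "monomial_ideal I" and mp: "m_primary I" using assms by auto
  have I: "is_ideal I" using mp by (rule mprim_ideal)
  define a where "a = alpha I"
  have IA: "I \<subseteq> Dg a" and a1: "a \<ge> 1" using min_generator[OF mon mp] by (auto simp: a_def)
  obtain m0 where m0: "Poly_Mapping.single m0 (1::'k) \<in> I" "mdeg m0 = a"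
    using min_generator(2)[OF mon mp] by (auto simp: a_def)
  define J where "J = ideal_pow I (Suc n)"
  have J: "is_ideal J" unfolding J_def by (rule ideal_pow_ideal)
  have JD: "J \<subseteq> Dg (Suc n * a)" unfolding J_def by (rule pow_Dg[OF IA])
  have exI: "\<exists>k f P. homogeneous k f \<and> P \<in> Ass I \<and> colon I f = P" by (rule socle_Ass[OF mp])
  then have "\<exists>f P. homogeneous (v_number I) f \<and> P \<in> Ass I \<and> colon I f = P"
    unfolding v_number_def by (rule LeastI_ex)
  then obtain g where g: "homogeneous (v_number I) g" "prime_ideal (colon I g)"
    by (auto simp: Ass_def)
  have vars_g: "var w * g \<in> I" for w
  proof -
    have "ideal_pow I (Suc 0) \<subseteq> colon I g"
    proof -
      have "ideal_pow I (Suc 0) \<subseteq> I" unfolding ideal_pow.simps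
        by (rule ideal_gen_least[OF I]) (auto intro: ideal_mult2[OF I])
      then show ?thesis using ideal_sub_colon[OF I] by blast
    qed
    then have "var w \<in> colon I g" using var_in_prime[OF mp g(2)] by blast
    then show ?thesis by (simp add: colon_def)
  qed
  have gnI: "g \<notin> I"
  proof
    assume "g \<in> I"
    then have "colon I g = UNIV" unfolding colon_def using ideal_mult[OF I] by blast
    then show False using g(2) by (simp add: prime_ideal_def)
  qed
  have g0: "g \<noteq> 0" using gnI ideal_0[OF I] by blast
  obtain mp where mpw: "Poly_Mapping.single m0 (1::'k) ^ n = Poly_Mapping.single mp 1" "mdeg mp = n * mdeg m0"
    using single_power_ex by blast
  define f where "f = Poly_Mapping.single mp 1 * g"
  have keysf: "Poly_Mapping.keys f = (\<lambda>k. mp + k) ` Poly_Mapping.keys g"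
    unfolding f_def by (rule keys_single_mult)
  have homf: "homogeneous (n * a + v_number I) f"
    using g(1) unfolding homogeneous_def keysf using mpw(2) m0(2) by (auto simp: mdeg_add)
  obtain kg where kg: "kg \<in> Poly_Mapping.keys g" using nonzero_key[OF g0] by blast
  have fnJ: "f \<notin> J"
  proof
    assume "f \<in> J"
    then have "f \<in> Dg (Suc n * a)" using JD by blast
    moreover have "mp + kg \<in> Poly_Mapping.keys f" using keysf kg by blast
    ultimately have "Suc n * a \<le> mdeg (mp + kg)" by (simp add: Dg_def)
    moreover have "mdeg (mp + kg) = n * a + v_number I" using homf \<open>mp + kg \<in> Poly_Mapping.keys f\<close>
      by (simp add: homogeneous_def)
    ultimately show False using assms(3) a1 unfolding a_def by simp
  qed
  have varsf: "var w * f \<in> J" for w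
  proof -
    have "Poly_Mapping.single mp 1 \<in> ideal_pow I n" using ideal_pow_power[OF m0(1), of n] mpw(1) by simp
    then have "(var w * g) * Poly_Mapping.single mp 1 \<in> J" unfolding J_def
      by (rule ideal_pow_mult[OF vars_g])
    then show ?thesis unfolding f_def by (simp add: ac_simps)
  qed
  have colf: "colon J f = Zc"
  proof (rule Zc_eq)
    show "is_ideal (colon J f)" by (rule colon_ideal[OF J])
    show "var w \<in> colon J f" for w using varsf by (simp add: colon_def)
    show "colon J f \<noteq> UNIV"
    proof
      assume "colon J f = UNIV"
      then have "1 \<in> colon J f" by simp
      then show False using fnJ unfolding colon_def by simp
    qed
  qed
  have exJ: "\<exists>f P. homogeneous (n * a + v_number I) f \<and> P \<in> Ass J \<and> colon J f = P"
    using homf colf Zc_prime unfolding Ass_def by blast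
  then have ub: "v_number J \<le> n * a + v_number I"
    unfolding v_number_def by (rule Least_le)
  have "\<exists>f P. homogeneous (v_number J) f \<and> P \<in> Ass J \<and> colon J f = P"
    unfolding v_number_def by (rule LeastI_ex) (use exJ in blast)
  then obtain h where h: "homogeneous (v_number J) h" "prime_ideal (colon J h)"
    by (auto simp: Ass_def)
  have hnJ: "h \<notin> J"
  proof
    assume "h \<in> J"
    then have "colon J h = UNIV" unfolding colon_def using ideal_mult[OF J] by blast
    then show False using h(2) by (simp add: prime_ideal_def)
  qed
  have h0: "h \<noteq> 0" using hnJ ideal_0[OF J] by blast
  obtain kh where kh: "kh \<in> Poly_Mapping.keys h" using nonzero_key[OF h0] by blast
  define w :: 'v where "w = undefined"
  have "var w \<in> colon J h" using var_in_prime[OF mp h(2)] ideal_sub_colon[OF J] unfolding J_def by blast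
  then have "var w * h \<in> J" by (simp add: colon_def)
  then have "var w * h \<in> Dg (Suc n * a)" using JD by blast
  moreover have "Poly_Mapping.single w 1 + kh \<in> Poly_Mapping.keys (var w * h)"
    unfolding var_def keys_single_mult using kh by blast
  ultimately have "Suc n * a \<le> mdeg (Poly_Mapping.single w 1 + kh)" by (simp add: Dg_def)
  moreover have "mdeg (Poly_Mapping.single w 1 + kh) = 1 + v_number J"
    using h(1) kh by (simp add: homogeneous_def mdeg_add mdeg_single)
  ultimately have lb: "Suc n * a \<le> 1 + v_number J" by simp
  show ?thesis using ub lb assms(3) a1 unfolding J_def a_def by simp
qed

end
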